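(* Let $\mathcal{V}$ be a finite set of nodes, $\mathcal{P}$ a finite set of labels with $|\mathcal{P}|\ge 2$, and $\mathcal{E}$ a set of unordered pairs $\{i,j\}\subseteq\mathcal{V}$. Let $\theta_{ip}\in\mathbb{R}$ for $i\in\mathcal{V},p\in\mathcal{P}$, and let the pairwise potentials be associative: $\theta_{ij}(p,q)=-C_{ij,p}[p=q]$ with $C_{ij,p}\ge 0$. For $\vec{y}\in\{0,1\}^{\mathcal{V}\times\mathcal{P}}$ and $\vec{\lambda}\in\mathbb{R}^{\mathcal{V}}$ define $$L(\vec{y},\vec{\lambda})=\sum_{i\in\mathcal{V}}\sum_{p\in\mathcal{P}}\theta_{ip}y_{ip}-\sum_{\{i,j\}\in\mathcal{E}}\sum_{p\in\mathcal{P}}C_{ij,p}\,y_{ip}y_{jp}+\sum_{i\in\mathcal{V}}\lambda_i\Big(\sum_{p\in\mathcal{P}}y_{ip}-1\Big),$$ and $D(\vec{\lambda})=\min_{\vec{y}\in\{0,1\}^{\mathcal{V}\times\mathcal{P}}}L(\vec{y},\vec{\lambda})$. Fix $\vec{\lambda}^{old}\in\mathbb{R}^{\mathcal{V}}$ and a node $j\in\mathcal{V}$. For $p\in\mathcal{P}$ and $k\in\{0,1\}$ let $MM_{jp,k}=\min\{L(\vec{y},\vec{\lambda}^{old}):\vec{y}\in\{0,1\}^{\mathcal{V}\times\mathcal{P}},\ y_{jp}=k\}$ and $\delta^j_p=MM_{jp,0}-MM_{jp,1}$. Let $p^{(1)}_j\in\arg\max_{p\in\mathcal{P}}\delta^j_p$,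 $\delta^j_{(1)}=\delta^j_{p^{(1)}_j}$, and $\delta^j_{(2)}=\max_{p\in\mathcal{P}\setminus\{p^{(1)}_j\}}\delta^j_p$. Let $\Delta_j$ be any number in $[\delta^j_{(2)},\delta^j_{(1)}]$ and define $\vec{\lambda}^{new}$ by $\lambda^{new}_j=\lambda^{old}_j+\Delta_j$ and $\lambda^{new}_i=\lambda^{old}_i$ for $i\ne j$. Then $\vec{\lambda}^{new}$ maximizes $D$ with respect to the coordinate $\lambda_j$: $D(\vec{\lambda}^{new})\ge D(\vec{\lambda})$ for every $\vec{\lambda}\in\mathbb{R}^{\mathcal{V}}$ with $\lambda_i=\lambda^{old}_i$ for all $i\ne j$.
   Context: This is the setting of minimizing a pairwise energy $E(\vec x)=\sum_i\theta_i(x_i)+\sum_{\{i,j\}\in\mathcal{E}}\theta_{ij}(x_i,x_j)$ over labelings $\vec x\in\mathcal{P}^{\mathcal{V}}$, rewritten with indicator variables $y_{ip}=[x_i=p]$; $L$ is the Lagrangian obtained by relaxing the consistency constraints $\sum_p y_{ip}=1$ with multipliers $\lambda_i$, and $D$ is the corresponding Lagrangian dual function. *)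

theory Defs
  imports Complex_Main
begin

text \<open>Binary labelings y in {0,1}^(V x P), represented as real-valued functions,
  fixed to 0 outside V x P so that the set of labelings is finite.\<close>
definition binlab :: "'v set \<Rightarrow> 'p set \<Rightarrow> ('v \<Rightarrow> 'p \<Rightarrow> real) set" where
  "binlab V P = {y. \<forall>i p. y i p \<in> {0, 1} \<and> ((i \<notin> V \<or> p \<notin> P) \<longrightarrow> y i p = 0)}"

text \<open>The Lagrangian. Edges are unordered pairs e = {i,j}; the product over e is y_ip * y_jp.\<close>
definition lagr :: "'v set \<Rightarrow> 'p set \<Rightarrow> 'v set set \<Rightarrow> ('v \<Rightarrow> 'p \<Rightarrow> real)
    \<Rightarrow> ('v set \<Rightarrow> 'p \<Rightarrow> real) \<Rightarrow> ('v \<Rightarrow> 'p \<Rightarrow> real) \<Rightarrow> ('v \<Rightarrow> real) \<Rightarrow> real" where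
  "lagr V P E \<theta> C y lam =
     (\<Sum>i\<in>V. \<Sum>p\<in>P. \<theta> i p * y i p)
     - (\<Sum>e\<in>E. \<Sum>p\<in>P. C e p * (\<Prod>i\<in>e. y i p))
     + (\<Sum>i\<in>V. lam i * ((\<Sum>p\<in>P. y i p) - 1))"

definition dualfn :: "'v set \<Rightarrow> 'p set \<Rightarrow> 'v set set \<Rightarrow> ('v \<Rightarrow> 'p \<Rightarrow> real)
    \<Rightarrow> ('v set \<Rightarrow> 'p \<Rightarrow> real) \<Rightarrow> ('v \<Rightarrow> real) \<Rightarrow> real" where
  "dualfn V P E \<theta> C lam = Min ((\<lambda>y. lagr V P E \<theta> C y lam) ` binlab V P)"

definition minmarg :: "'v set \<Rightarrow> 'p set \<Rightarrow> 'v set set \<Rightarrow> ('v \<Rightarrow> 'p \<Rightarrow> real)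
    \<Rightarrow> ('v set \<Rightarrow> 'p \<Rightarrow> real) \<Rightarrow> ('v \<Rightarrow> real) \<Rightarrow> 'v \<Rightarrow> 'p \<Rightarrow> real \<Rightarrow> real" where
  "minmarg V P E \<theta> C lam j p k =
     Min ((\<lambda>y. lagr V P E \<theta> C y lam) ` {y \<in> binlab V P. y j p = k})"

definition mmdiff :: "'v set \<Rightarrow> 'p set \<Rightarrow> 'v set set \<Rightarrow> ('v \<Rightarrow> 'p \<Rightarrow> real)
    \<Rightarrow> ('v set \<Rightarrow> 'p \<Rightarrow> real) \<Rightarrow> ('v \<Rightarrow> real) \<Rightarrow> 'v \<Rightarrow> 'p \<Rightarrow> real" where
  "mmdiff V P E \<theta> C lam j p = minmarg V P E \<theta> C lam j p 0 - minmarg V P E \<theta> C lam j p 1"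

end

theory Submission
  imports Defs
begin

definition col :: "'v set \<Rightarrow> 'v set set \<Rightarrow> ('v \<Rightarrow> 'p \<Rightarrow> real)
    \<Rightarrow> ('v set \<Rightarrow> 'p \<Rightarrow> real) \<Rightarrow> ('v \<Rightarrow> real) \<Rightarrow> 'p \<Rightarrow> ('v \<Rightarrow> 'p \<Rightarrow> real) \<Rightarrow> real" where
  "col V E \<theta> C lam p y = (\<Sum>i\<in>V. (\<theta> i p + lam i) * y i p) - (\<Sum>e\<in>E. C e p * (\<Prod>i\<in>e. y i p))"

lemma lagr_col:
  assumes "finite V" "finite P"
  shows "lagr V P E \<theta> C y lam = (\<Sum>p\<in>P. col V E \<theta> C lam p y) - (\<Sum>i\<in>V. lam i)"
proof -
  have a: "(\<Sum>i\<in>V. \<Sum>p\<in>P. \<theta> i p * y i p) = (\<Sum>p\<in>P. \<Sum>i\<in>V. \<theta> i p * y i p)"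
    by (rule sum.swap)
  have b: "(\<Sum>e\<in>E. \<Sum>p\<in>P. C e p * (\<Prod>i\<in>e. y i p)) = (\<Sum>p\<in>P. \<Sum>e\<in>E. C e p * (\<Prod>i\<in>e. y i p))"
    by (rule sum.swap)
  have c: "(\<Sum>i\<in>V. lam i * ((\<Sum>p\<in>P. y i p) - 1)) = (\<Sum>p\<in>P. \<Sum>i\<in>V. lam i * y i p) - (\<Sum>i\<in>V. lam i)"
  proof -
    have "(\<Sum>i\<in>V. lam i * ((\<Sum>p\<in>P. y i p) - 1)) = (\<Sum>i\<in>V. \<Sum>p\<in>P. lam i * y i p) - (\<Sum>i\<in>V. lam i)"
      by (simp add: right_diff_distrib sum_subtractf sum_distrib_left)
    also have "\<dots> = (\<Sum>p\<in>P. \<Sum>i\<in>V. lam i * y i p) - (\<Sum>i\<in>V. lam i)"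
      by (subst sum.swap) (rule refl)
    finally show ?thesis .
  qed
  show ?thesis
    unfolding lagr_def col_def a b c
    by (simp add: distrib_right sum.distrib sum_subtractf)
qed

lemma col_local:
  assumes "\<And>i. y i p = z i p"
  shows "col V E \<theta> C lam p y = col V E \<theta> C lam p z"
  unfolding col_def using assms by simp

lemma binlab_finite: "finite V \<Longrightarrow> finite P \<Longrightarrow> finite (binlab V P)"
proof -
  assume f: "finite V" "finite P"
  define g :: "('a \<times> 'b) set \<Rightarrow> 'a \<Rightarrow> 'b \<Rightarrow> real" where "g = (\<lambda>S i p. if (i,p) \<in> S then 1 else 0)"
  have "binlab V P \<subseteq> g ` Pow (V \<times> P)"
  proof
    fix y assume y: "y \<in> binlab V P"
    define S where "S = {(i,p). y i p = 1}"
    have "S \<subseteq> V \<times> P"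
    proof
      fix x assume "x \<in> S"
      then obtain i p where x: "x = (i,p)" "y i p = 1" unfolding S_def by blast
      have "y i p \<in> {0, 1} \<and> ((i \<notin> V \<or> p \<notin> P) \<longrightarrow> y i p = 0)" using y unfolding binlab_def by blast
      then show "x \<in> V \<times> P" using x by auto
    qed
    moreover have "y = g S"
    proof (intro ext)
      fix i p
      have "y i p \<in> {0,1}" using y unfolding binlab_def by blast
      then show "y i p = g S i p" unfolding g_def S_def by auto
    qed
    ultimately show "y \<in> g ` Pow (V \<times> P)" by blast
  qed
  moreover have "finite (g ` Pow (V \<times> P))" using f by simp
  ultimately show ?thesis using finite_subset by blast
qed

lemma minimizer_col:
  assumes fin: "finite V" "finite P" and q: "q \<in> P"
    and w: "w \<in> binlab V P" "w j p = k"
    and wmin: "\<forall>y\<in>binlab V P. y j p = k \<longrightarrow> lagr V P E \<theta> C w lam \<le> lagr V P E \<theta> C y lam"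
    and z: "z \<in> binlab V P" "q = p \<longrightarrow> z j p = k"
  shows "col V E \<theta> C lam q w \<le> col V E \<theta> C lam q z"
proof -
  define y' where "y' = (\<lambda>i r. if r = q then z i r else w i r)"
  have y'b: "y' \<in> binlab V P" using w(1) z(1) unfolding binlab_def y'_def by auto
  have y'j: "y' j p = k" using w(2) z(2) unfolding y'_def by auto
  have "lagr V P E \<theta> C w lam \<le> lagr V P E \<theta> C y' lam" using wmin y'b y'j by blast
  moreover have "(\<Sum>r\<in>P. col V E \<theta> C lam r y') = col V E \<theta> C lam q z + (\<Sum>r\<in>P-{q}. col V E \<theta> C lam r w)"
  proof -
    have "(\<Sum>r\<in>P. col V E \<theta> C lam r y') = col V E \<theta> C lam q y' + (\<Sum>r\<in>P-{q}. col V E \<theta> C lam r y')"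
      using fin q by (simp add: sum.remove)
    moreover have "col V E \<theta> C lam q y' = col V E \<theta> C lam q z"
      by (rule col_local) (simp add: y'_def)
    moreover have "(\<Sum>r\<in>P-{q}. col V E \<theta> C lam r y') = (\<Sum>r\<in>P-{q}. col V E \<theta> C lam r w)"
      by (rule sum.cong) (auto intro!: col_local simp: y'_def)
    ultimately show ?thesis by simp
  qed
  moreover have "(\<Sum>r\<in>P. col V E \<theta> C lam r w) = col V E \<theta> C lam q w + (\<Sum>r\<in>P-{q}. col V E \<theta> C lam r w)"
    using fin q by (simp add: sum.remove)
  ultimately show ?thesis using lagr_col[OF fin] by simp
qed

lemma witness:
  assumes fin: "finite V" "finite P" and j: "j \<in> V" and p: "p \<in> P" and k: "k \<in> {0,1}"
  shows "\<exists>w. w \<in> binlab V P \<and> w j p = k \<and>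
     (\<forall>y\<in>binlab V P. y j p = k \<longrightarrow> lagr V P E \<theta> C w lam \<le> lagr V P E \<theta> C y lam) \<and>
     minmarg V P E \<theta> C lam j p k = lagr V P E \<theta> C w lam"
proof -
  let ?S = "{y \<in> binlab V P. y j p = k}"
  have "(\<lambda>i r. if i = j \<and> r = p then k else 0) \<in> ?S"
    using j p k unfolding binlab_def by auto
  hence ne: "(\<lambda>y. lagr V P E \<theta> C y lam) ` ?S \<noteq> {}" by blast
  have fi: "finite ((\<lambda>y. lagr V P E \<theta> C y lam) ` ?S)" using binlab_finite[OF fin] by simp
  obtain w where w: "w \<in> ?S" "Min ((\<lambda>y. lagr V P E \<theta> C y lam) ` ?S) = lagr V P E \<theta> C w lam"
    using Min_in[OF fi ne] by auto
  have "\<forall>y\<in>binlab V P. y j p = k \<longrightarrow> lagr V P E \<theta> C w lam \<le> lagr V P E \<theta> C y lam"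
    using w(2) Min_le[OF fi] by force
  then show ?thesis using w unfolding minmarg_def by blast
qed

lemma col_shift:
  assumes "finite V" "j \<in> V"
  shows "col V E \<theta> C (la(j := la j + d)) r y = col V E \<theta> C la r y + d * y j r"
proof -
  have "(\<Sum>i\<in>V. (\<theta> i r + (la(j := la j + d)) i) * y i r)
      = (\<Sum>i\<in>V. (\<theta> i r + la i) * y i r + (if i = j then d * y i r else 0))"
    by (rule sum.cong) (auto simp: algebra_simps)
  also have "\<dots> = (\<Sum>i\<in>V. (\<theta> i r + la i) * y i r) + d * y j r"
    using assms by (simp add: sum.distrib)
  finally show ?thesis unfolding col_def by simp
qed

theorem theorem1:
  fixes V :: "'v set" and P :: "'p set" and E :: "'v set set"
    and \<theta> :: "'v \<Rightarrow> 'p \<Rightarrow> real" and C :: "'v set \<Rightarrow> 'p \<Rightarrow> real"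
    and lamold :: "'v \<Rightarrow> real" and j :: 'v and p1 :: 'p and \<Delta> :: real
  assumes "finite V" and "finite P" and "card P \<ge> 2"
    and "\<forall>e\<in>E. e \<subseteq> V \<and> card e = 2"
    and "\<forall>e\<in>E. \<forall>p\<in>P. C e p \<ge> 0"
    and "j \<in> V"
    and "p1 \<in> P"
    and "\<forall>p\<in>P. mmdiff V P E \<theta> C lamold j p \<le> mmdiff V P E \<theta> C lamold j p1"
    and "Max ((mmdiff V P E \<theta> C lamold j) ` (P - {p1})) \<le> \<Delta>"
    and "\<Delta> \<le> mmdiff V P E \<theta> C lamold j p1"
  shows "\<forall>lam. (\<forall>i\<in>V. i \<noteq> j \<longrightarrow> lam i = lamold i) \<longrightarrow>
           dualfn V P E \<theta> C lam \<le> dualfn V P E \<theta> C (lamold(j := lamold j + \<Delta>))"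
proof (intro allI impI)
  fix lam assume lam: "\<forall>i\<in>V. i \<noteq> j \<longrightarrow> lam i = lamold i"
  define lamnew where "lamnew = lamold(j := lamold j + \<Delta>)"
  note fin = assms(1,2)
  have jV: "j \<in> V" and p1P: "p1 \<in> P" using assms by auto
  define w where "w = (\<lambda>p k. SOME w. w \<in> binlab V P \<and> w j p = k \<and>
     (\<forall>y\<in>binlab V P. y j p = k \<longrightarrow> lagr V P E \<theta> C w lamold \<le> lagr V P E \<theta> C y lamold) \<and>
     minmarg V P E \<theta> C lamold j p k = lagr V P E \<theta> C w lamold)"
  have W: "w p k \<in> binlab V P \<and> w p k j p = k \<and>
     (\<forall>y\<in>binlab V P. y j p = k \<longrightarrow> lagr V P E \<theta> C (w p k) lamold \<le> lagr V P E \<theta> C y lamold) \<and>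
     minmarg V P E \<theta> C lamold j p k = lagr V P E \<theta> C (w p k) lamold"
    if "p \<in> P" "k \<in> {0,1}" for p k
    unfolding w_def by (rule someI_ex[OF witness[OF fin jV that, of E \<theta> C lamold]])
  define c where "c = (\<lambda>p k. col V E \<theta> C lamold p (w p k))"
  have cmin: "c p k \<le> col V E \<theta> C lamold p y"
    if "p \<in> P" "k \<in> {0,1}" "y \<in> binlab V P" "y j p = k" for p k y
    unfolding c_def using minimizer_col[OF fin that(1), of "w p k" j p k E \<theta> C lamold y] W[OF that(1,2)] that
    by blast
  have oth: "col V E \<theta> C lamold q (w p 0) = col V E \<theta> C lamold q (w p 1)"
    if "p \<in> P" "q \<in> P" "q \<noteq> p" for p q
  proof -
    have W0: "w p 0 \<in> binlab V P \<and> w p 0 j p = 0 \<and>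
     (\<forall>y\<in>binlab V P. y j p = 0 \<longrightarrow> lagr V P E \<theta> C (w p 0) lamold \<le> lagr V P E \<theta> C y lamold)"
      using W[OF that(1)] by simp
    have W1: "w p 1 \<in> binlab V P \<and> w p 1 j p = 1 \<and>
     (\<forall>y\<in>binlab V P. y j p = 1 \<longrightarrow> lagr V P E \<theta> C (w p 1) lamold \<le> lagr V P E \<theta> C y lamold)"
      using W[OF that(1)] by simp
    show ?thesis
      using minimizer_col[OF fin that(2), of "w p 0" j p 0 E \<theta> C lamold "w p 1"]
        minimizer_col[OF fin that(2), of "w p 1" j p 1 E \<theta> C lamold "w p 0"] W0 W1 that(3)
      by linarith
  qed
  have delta: "mmdiff V P E \<theta> C lamold j p = c p 0 - c p 1" if p: "p \<in> P" for p
  proof -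
    have "mmdiff V P E \<theta> C lamold j p = lagr V P E \<theta> C (w p 0) lamold - lagr V P E \<theta> C (w p 1) lamold"
      unfolding mmdiff_def using W[OF p] by simp
    also have "\<dots> = (\<Sum>q\<in>P. col V E \<theta> C lamold q (w p 0)) - (\<Sum>q\<in>P. col V E \<theta> C lamold q (w p 1))"
      using lagr_col[OF fin] by simp
    also have "\<dots> = c p 0 - c p 1"
    proof -
      have "(\<Sum>q\<in>P-{p}. col V E \<theta> C lamold q (w p 0)) = (\<Sum>q\<in>P-{p}. col V E \<theta> C lamold q (w p 1))"
        by (rule sum.cong) (auto intro: oth[OF p])
      then show ?thesis unfolding c_def using fin p by (simp add: sum.remove)
    qed
    finally show ?thesis .
  qed
  have dlow: "mmdiff V P E \<theta> C lamold j q \<le> \<Delta>" if "q \<in> P" "q \<noteq> p1" for q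
  proof -
    have "mmdiff V P E \<theta> C lamold j q \<le> Max ((mmdiff V P E \<theta> C lamold j) ` (P - {p1}))"
      using fin that by (intro Max_ge) auto
    then show ?thesis using assms(9) by linarith
  qed
  define y0 where "y0 = (\<lambda>i r. if r = p1 then w p1 1 i r else if r \<in> P then w r 0 i r else 0)"
  have y0b: "y0 \<in> binlab V P"
  proof -
    have "\<And>r. r \<in> P \<Longrightarrow> w r 0 \<in> binlab V P" "w p1 1 \<in> binlab V P" using W p1P by auto
    then show ?thesis unfolding binlab_def y0_def using p1P by auto
  qed
  have y0j: "y0 j r = (if r = p1 then 1 else 0)" if "r \<in> P" for r
    using W that p1P unfolding y0_def by auto
  have y0col: "col V E \<theta> C lamold r y0 = (if r = p1 then c p1 1 else c r 0)" if "r \<in> P" for r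
    unfolding c_def using that by (cases "r = p1") (auto intro!: col_local simp: y0_def)
  have percol: "col V E \<theta> C lamnew r y0 \<le> col V E \<theta> C lamnew r y"
    if r: "r \<in> P" and y: "y \<in> binlab V P" for r y
  proof -
    have yv: "y j r \<in> {0,1}" using y unfolding binlab_def by blast
    have e1: "col V E \<theta> C lamnew r y0 = col V E \<theta> C lamold r y0 + \<Delta> * y0 j r"
      unfolding lamnew_def by (rule col_shift[OF fin(1) jV])
    have e2: "col V E \<theta> C lamnew r y = col V E \<theta> C lamold r y + \<Delta> * y j r"
      unfolding lamnew_def by (rule col_shift[OF fin(1) jV])
    show ?thesis
    proof (cases "r = p1")
      case True
      then show ?thesis using e1 e2 y0col[OF r] y0j[OF r] yv cmin[OF r _ y] delta[OF r] assms(10)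
        by (cases "y j r = 0") auto
    next
      case False
      then show ?thesis using e1 e2 y0col[OF r] y0j[OF r] yv cmin[OF r _ y] delta[OF r] dlow[OF r False]
        by (cases "y j r = 0") auto
    qed
  qed
  have y0min: "lagr V P E \<theta> C y0 lamnew \<le> lagr V P E \<theta> C y lamnew" if "y \<in> binlab V P" for y
    unfolding lagr_col[OF fin] using percol[OF _ that] by (simp add: sum_mono)
  have s1: "(\<Sum>p\<in>P. y0 j p) = 1"
  proof -
    have "(\<Sum>p\<in>P. y0 j p) = y0 j p1 + (\<Sum>p\<in>P-{p1}. y0 j p)" using fin p1P by (simp add: sum.remove)
    also have "(\<Sum>p\<in>P-{p1}. y0 j p) = 0" by (rule sum.neutral) (auto simp: y0j)
    finally show ?thesis using y0j[OF p1P] by simp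
  qed
  have same: "lagr V P E \<theta> C y0 lam = lagr V P E \<theta> C y0 lamnew"
  proof -
    have "(\<Sum>i\<in>V. lam i * ((\<Sum>p\<in>P. y0 i p) - 1)) = (\<Sum>i\<in>V. lamnew i * ((\<Sum>p\<in>P. y0 i p) - 1))"
      by (rule sum.cong) (auto simp: s1 lam lamnew_def)
    then show ?thesis unfolding lagr_def by simp
  qed
  have finB: "finite (binlab V P)" using binlab_finite[OF fin] .
  have "dualfn V P E \<theta> C lam \<le> lagr V P E \<theta> C y0 lam"
    unfolding dualfn_def using finB y0b by (intro Min_le) auto
  moreover obtain y' where y': "y' \<in> binlab V P" "dualfn V P E \<theta> C lamnew = lagr V P E \<theta> C y' lamnew"
  proof -
    have "dualfn V P E \<theta> C lamnew \<in> (\<lambda>y. lagr V P E \<theta> C y lamnew) ` binlab V P"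
      unfolding dualfn_def using finB y0b by (intro Min_in) auto
    then show ?thesis using that by blast
  qed
  ultimately show "dualfn V P E \<theta> C lam \<le> dualfn V P E \<theta> C (lamold(j := lamold j + \<Delta>))"
    using same y0min[OF y'(1)] unfolding lamnew_def[symmetric] by linarith
qed

end
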